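(* Let $\beta\ge 1$ and let $R=(S^0,\dots,S^T)$ be a $\beta$-bounded $T$-covering in a congestion game in which every delay function is $f(x)=x$. Then $C(S^T)\le 2\rho(R)$.
   Context: A congestion game has players $N=\{1,\dots,n\}$, a finite resource set $E$ and strategy sets $\Sigma_i\subseteq 2^E$. For a profile $S=(s_1,\dots,s_n)$, $n_e(S)=|\{i: e\in s_i\}|$. Here all delays are $f(x)=x$, so the cost of player $i$ is $c_i(S)=\sum_{e\in s_i}n_e(S)$ and the social cost is $C(S)=\sum_i c_i(S)=\sum_{e\in E}n_e(S)^2$. Fix an optimal profile $S^*=(s_1^*,\dots,s_n^* )$ minimizing $C$ and write $\mathrm{OPT}=C(S^* )$. A best response of player $i$ in $S$ is a strategy $s_i^b\in\Sigma_i$ minimizing $c_i(S_{-i},\cdot)$ over $\Sigma_i$ (where $(S_{-i},s_i')$ replaces $s_i$ by $s_i'$); if no strategy strictly decreases $i$'s cost, the best response is $s_i$ itself. A $T$-covering is a sequence of profiles $R=(S^0,\dots,S^T)$ together with players $\pi(1),\dots,\pi(T)$ such that for each $1\le t\le T$, $S^t=(S^{t-1}_{-\pi(t)},s')$ where $s'$ is a best response of $\pi(t)$ in $S^{t-1}$, and every player of $N$ occurs at least once among $\pi(1),\dots,\pi(T)$. It is $\beta$-bounded if every player occurs at most $\beta$ times among $\pi(1),\dots,\pi(T)$. For each player $i$, $\mathrm{last}(i)=\max\{t:\pi(t)=i\}$. Define $\rho(R)=\sum_{i=1}^n\sum_{e\in s_i^*}\bigl(n_e(S^{\mathrm{last}(i)-1})+1\bigr)$.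 *)

theory Defs
  imports Main
begin

text \<open>Players are 0,...,n-1 (the paper's 1,...,n shifted). A profile is a function
  from players to strategies (sets of resources); entries for indices \<ge> n are ignored.\<close>

type_synonym 'e profile = "nat \<Rightarrow> 'e set"

definition load :: "nat \<Rightarrow> 'e profile \<Rightarrow> 'e \<Rightarrow> nat" where
  "load n S e = card {i \<in> {..<n}. e \<in> S i}"

definition pcost :: "nat \<Rightarrow> 'e profile \<Rightarrow> nat \<Rightarrow> nat" where
  "pcost n S i = (\<Sum>e\<in>S i. load n S e)"

definition social_cost :: "nat \<Rightarrow> 'e set \<Rightarrow> 'e profile \<Rightarrow> nat" where
  "social_cost n E S = (\<Sum>e\<in>E. (load n S e)^2)"

definition valid_profile :: "nat \<Rightarrow> (nat \<Rightarrow> 'e set set) \<Rightarrow> 'e profile \<Rightarrow> bool" where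
  "valid_profile n \<Sigma> S \<longleftrightarrow> (\<forall>i<n. S i \<in> \<Sigma> i)"

definition congestion_game :: "nat \<Rightarrow> 'e set \<Rightarrow> (nat \<Rightarrow> 'e set set) \<Rightarrow> bool" where
  "congestion_game n E \<Sigma> \<longleftrightarrow> finite E \<and> (\<forall>i<n. \<Sigma> i \<subseteq> Pow E)"

definition is_optimal :: "nat \<Rightarrow> 'e set \<Rightarrow> (nat \<Rightarrow> 'e set set) \<Rightarrow> 'e profile \<Rightarrow> bool" where
  "is_optimal n E \<Sigma> S \<longleftrightarrow> valid_profile n \<Sigma> S \<and>
     (\<forall>S'. valid_profile n \<Sigma> S' \<longrightarrow> social_cost n E S \<le> social_cost n E S')"

definition best_response :: "nat \<Rightarrow> (nat \<Rightarrow> 'e set set) \<Rightarrow> 'e profile \<Rightarrow> nat \<Rightarrow> 'e set \<Rightarrow> bool" where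
  "best_response n \<Sigma> S i s' \<longleftrightarrow> s' \<in> \<Sigma> i \<and>
     (\<forall>s\<in>\<Sigma> i. pcost n (S(i := s')) i \<le> pcost n (S(i := s)) i) \<and>
     ((\<forall>s\<in>\<Sigma> i. pcost n S i \<le> pcost n (S(i := s)) i) \<longrightarrow> s' = S i)"

definition is_covering :: "nat \<Rightarrow> (nat \<Rightarrow> 'e set set) \<Rightarrow> nat \<Rightarrow> (nat \<Rightarrow> 'e profile) \<Rightarrow> (nat \<Rightarrow> nat) \<Rightarrow> bool" where
  "is_covering n \<Sigma> T Sq \<pi> \<longleftrightarrow> valid_profile n \<Sigma> (Sq 0) \<and>
     (\<forall>t\<in>{1..T}. \<pi> t < n \<and>
        (\<exists>s'. best_response n \<Sigma> (Sq (t - 1)) (\<pi> t) s' \<and> Sq t = (Sq (t - 1))(\<pi> t := s'))) \<and>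
     (\<forall>i<n. \<exists>t\<in>{1..T}. \<pi> t = i)"

definition is_bounded :: "nat \<Rightarrow> nat \<Rightarrow> nat \<Rightarrow> (nat \<Rightarrow> nat) \<Rightarrow> bool" where
  "is_bounded \<beta> n T \<pi> \<longleftrightarrow> (\<forall>i<n. card {t\<in>{1..T}. \<pi> t = i} \<le> \<beta>)"

definition last_move :: "nat \<Rightarrow> (nat \<Rightarrow> nat) \<Rightarrow> nat \<Rightarrow> nat" where
  "last_move T \<pi> i = Max {t\<in>{1..T}. \<pi> t = i}"

definition rho :: "nat \<Rightarrow> 'e profile \<Rightarrow> nat \<Rightarrow> (nat \<Rightarrow> 'e profile) \<Rightarrow> (nat \<Rightarrow> nat) \<Rightarrow> nat" where
  "rho n Sstar T Sq \<pi> = (\<Sum>i<n. \<Sum>e\<in>Sstar i. load n (Sq (last_move T \<pi> i - 1)) e + 1)"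

end

theory Submission
  imports Defs
begin

lemma comb_sq:
  fixes l :: "nat \<Rightarrow> nat"
  assumes "finite P"
  shows "(card P)^2 \<le> 2 * (\<Sum>i\<in>P. card {j\<in>P. l j \<le> l i})"
proof -
  have c: "\<And>i. card {j\<in>P. l j \<le> l i} = (\<Sum>j\<in>P. if l j \<le> l i then 1 else 0)"
    using assms card_eq_sum[of "{j\<in>P. l j \<le> l i}" for i] sum.inter_filter[OF assms, of "\<lambda>_. 1::nat"] by metis
  have "2 * (\<Sum>i\<in>P. card {j\<in>P. l j \<le> l i})
      = (\<Sum>i\<in>P. \<Sum>j\<in>P. (if l j \<le> l i then 1 else 0::nat))
        + (\<Sum>i\<in>P. \<Sum>j\<in>P. (if l j \<le> l i then 1 else 0::nat))"
    by (simp add: c)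
  also have "\<dots> = (\<Sum>i\<in>P. \<Sum>j\<in>P. (if l j \<le> l i then 1 else 0::nat))
        + (\<Sum>i\<in>P. \<Sum>j\<in>P. (if l i \<le> l j then 1 else 0::nat))"
    using sum.swap[of "\<lambda>i j. (if l j \<le> l i then 1 else 0::nat)" P P] by simp
  also have "\<dots> = (\<Sum>i\<in>P. \<Sum>j\<in>P. ((if l j \<le> l i then 1 else 0::nat) + (if l i \<le> l j then 1 else 0)))"
    by (simp add: sum.distrib)
  also have "\<dots> \<ge> (\<Sum>i\<in>P. \<Sum>j\<in>P. (1::nat))"
    by (intro sum_mono) auto
  finally show ?thesis by (simp add: power2_eq_square)
qed

lemma load_upd_le:
  assumes "i < n"
  shows "load n (S(i := s)) e \<le> load n S e + 1"
proof -
  have "{j \<in> {..<n}. e \<in> (S(i := s)) j} \<subseteq> insert i {j \<in> {..<n}. e \<in> S j}" by auto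
  hence "card {j \<in> {..<n}. e \<in> (S(i := s)) j} \<le> card (insert i {j \<in> {..<n}. e \<in> S j})"
    by (intro card_mono) auto
  also have "\<dots> \<le> card {j \<in> {..<n}. e \<in> S j} + 1" by (simp add: card_insert_le_m1 card_insert_if)
  finally show ?thesis unfolding load_def .
qed

theorem lemma1:
  fixes n T \<beta> :: nat and E :: "'e set" and \<Sigma> :: "nat \<Rightarrow> 'e set set"
    and Sstar :: "'e profile" and Sq :: "nat \<Rightarrow> 'e profile" and \<pi> :: "nat \<Rightarrow> nat"
  assumes "congestion_game n E \<Sigma>"
    and "is_optimal n E \<Sigma> Sstar"
    and "\<beta> \<ge> 1"
    and "is_covering n \<Sigma> T Sq \<pi>"
    and "is_bounded \<beta> n T \<pi>"
  shows "social_cost n E (Sq T) \<le> 2 * rho n Sstar T Sq \<pi>"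
proof -
  define l where "l = last_move T \<pi>"
  define F where "F = Sq T"
  have finE: "finite E" and SigE: "\<And>i. i < n \<Longrightarrow> \<Sigma> i \<subseteq> Pow E"
    using assms(1) unfolding congestion_game_def by auto
  have star: "\<And>i. i < n \<Longrightarrow> Sstar i \<in> \<Sigma> i"
    using assms(2) unfolding is_optimal_def valid_profile_def by auto
  have step: "\<And>t. t \<in> {1..T} \<Longrightarrow> \<pi> t < n \<and>
        (\<exists>s'. best_response n \<Sigma> (Sq (t - 1)) (\<pi> t) s' \<and> Sq t = (Sq (t - 1))(\<pi> t := s'))"
    using assms(4) unfolding is_covering_def by auto
  have cov: "\<And>i. i < n \<Longrightarrow> \<exists>t\<in>{1..T}. \<pi> t = i"
    using assms(4) unfolding is_covering_def by auto
  have lprops: "l i \<in> {1..T} \<and> \<pi> (l i) = i \<and> (\<forall>t\<in>{1..T}. \<pi> t = i \<longrightarrow> t \<le> l i)" if "i < n" for i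
  proof -
    have ne: "{t\<in>{1..T}. \<pi> t = i} \<noteq> {}" using cov[OF that] by auto
    have fin: "finite {t\<in>{1..T}. \<pi> t = i}" by simp
    show ?thesis using Max_in[OF fin ne] Max_ge[OF fin] unfolding l_def last_move_def by auto
  qed
  have stable: "Sq (l j + d) j = Sq (l j) j" if "j < n" "l j + d \<le> T" for j d
    using that(2)
  proof (induction d)
    case 0 then show ?case by simp
  next
    case (Suc d)
    have tT: "Suc (l j + d) \<in> {1..T}" using Suc.prems by auto
    obtain s' where "Sq (Suc (l j + d)) = (Sq (l j + d))(\<pi> (Suc (l j + d)) := s')"
      using step[OF tT] by auto
    moreover have "\<pi> (Suc (l j + d)) \<noteq> j"
      using lprops[OF that(1)] tT by fastforce
    ultimately show ?case using Suc by simp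
  qed
  have stable2: "Sq t j = Sq (l j) j" if "j < n" "l j \<le> t" "t \<le> T" for j t
    using stable[OF that(1), of "t - l j"] that by simp
  have lastmove: "\<exists>s'. best_response n \<Sigma> (Sq (l i - 1)) i s' \<and> Sq (l i) = (Sq (l i - 1))(i := s')"
    if "i < n" for i
    using step[of "l i"] lprops[OF that] by auto
  have FiE: "F i \<subseteq> E" and Fi: "F i = Sq (l i) i" if ilt: "i < n" for i
  proof -
    obtain s' where br: "best_response n \<Sigma> (Sq (l i - 1)) i s'" and eq: "Sq (l i) = (Sq (l i - 1))(i := s')"
      using lastmove[OF ilt] by auto
    show "F i = Sq (l i) i" unfolding F_def using stable2[OF ilt, of T] lprops[OF ilt] by auto
    then show "F i \<subseteq> E" using br eq SigE[OF ilt] unfolding best_response_def by auto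
  qed
  define P where "P e = {j \<in> {..<n}. e \<in> F j}" for e
  define h where "h e i = card {j\<in>P e. l j \<le> l i}" for e i
  have "social_cost n E (Sq T) = (\<Sum>e\<in>E. (card (P e))^2)"
    unfolding social_cost_def load_def P_def F_def by simp
  also have "\<dots> \<le> (\<Sum>e\<in>E. 2 * (\<Sum>i\<in>P e. h e i))"
    unfolding h_def by (intro sum_mono comb_sq) (simp add: P_def)
  also have "\<dots> = 2 * (\<Sum>e\<in>E. \<Sum>i\<in>P e. h e i)" by (simp add: sum_distrib_left)
  also have "(\<Sum>e\<in>E. \<Sum>i\<in>P e. h e i) = (\<Sum>e\<in>E. \<Sum>i\<in>{..<n}. if e \<in> F i then h e i else 0)"
    unfolding P_def by (intro sum.cong refl sum.inter_filter) simp
  also have "\<dots> = (\<Sum>i\<in>{..<n}. \<Sum>e\<in>E. if e \<in> F i then h e i else 0)"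
    by (rule sum.swap)
  also have "\<dots> = (\<Sum>i\<in>{..<n}. \<Sum>e\<in>F i. h e i)"
  proof (rule sum.cong[OF refl])
    fix i assume "i \<in> {..<n}"
    hence "{e \<in> E. e \<in> F i} = F i" using FiE by auto
    then show "(\<Sum>e\<in>E. if e \<in> F i then h e i else 0) = (\<Sum>e\<in>F i. h e i)"
      using sum.inter_filter[OF finE, of "\<lambda>e. h e i" "\<lambda>e. e \<in> F i"] by simp
  qed
  also have "\<dots> \<le> (\<Sum>i\<in>{..<n}. \<Sum>e\<in>Sstar i. load n (Sq (l i - 1)) e + 1)"
  proof (intro sum_mono)
    fix i assume "i \<in> {..<n}"
    hence i: "i < n" by simp
    have finF: "finite (F i)" using FiE[OF i] finE finite_subset by auto
    have "(\<Sum>e\<in>F i. h e i) \<le> (\<Sum>e\<in>F i. load n (Sq (l i)) e)"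
    proof (intro sum_mono)
      fix e assume e: "e \<in> F i"
      have "{j\<in>P e. l j \<le> l i} \<subseteq> {j \<in> {..<n}. e \<in> Sq (l i) j}"
      proof
        fix j assume "j \<in> {j\<in>P e. l j \<le> l i}"
        hence j: "j < n" "e \<in> F j" "l j \<le> l i" unfolding P_def by auto
        have "F j = Sq (l j) j" using Fi[OF j(1)] .
        also have "\<dots> = Sq (l i) j" using stable2[OF j(1) j(3)] lprops[OF i] by auto
        finally show "j \<in> {j \<in> {..<n}. e \<in> Sq (l i) j}" using j by auto
      qed
      then show "h e i \<le> load n (Sq (l i)) e"
        unfolding h_def load_def by (intro card_mono) auto
    qed
    also have "\<dots> = pcost n (Sq (l i)) i" unfolding pcost_def Fi[OF i] ..
    also have "\<dots> \<le> pcost n ((Sq (l i - 1))(i := Sstar i)) i"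
    proof -
      obtain s' where br: "best_response n \<Sigma> (Sq (l i - 1)) i s'" and eq: "Sq (l i) = (Sq (l i - 1))(i := s')"
        using lastmove[OF i] by auto
      show ?thesis using br star[OF i] unfolding eq best_response_def by auto
    qed
    also have "\<dots> \<le> (\<Sum>e\<in>Sstar i. load n (Sq (l i - 1)) e + 1)"
      unfolding pcost_def fun_upd_same by (intro sum_mono load_upd_le[OF i])
    finally show "(\<Sum>e\<in>F i. h e i) \<le> (\<Sum>e\<in>Sstar i. load n (Sq (l i - 1)) e + 1)" .
  qed
  also have "\<dots> = rho n Sstar T Sq \<pi>" unfolding rho_def l_def ..
  finally show ?thesis by simp
qed

end
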